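(* Let $D\subset\mathbb R^N$ be open and convex and $w:D\to\mathbb R$ convex. Suppose that for some $x_0\in D$, $$w(x)=w(x_0)+\langle p_0,x-x_0\rangle+\tfrac12\langle A(x-x_0),x-x_0\rangle+o(\|x-x_0\|^2)$$ for some $p_0\in\mathbb R^N$ and a symmetric $N\times N$ matrix $A$. Let $f$ be a continuously differentiable real function on a neighbourhood of $p_0$. Then $$\lim_{x\to x_0}\ \sup_{p\in\partial w(x)}\frac{|f(p)-f(p_0)-\langle\nabla f(p_0),A(x-x_0)\rangle|}{\|x-x_0\|}=0,$$ where $\partial w(x)$ is the subdifferential of $w$ at $x$. *)

theory Defs
  imports "HOL-Analysis.Analysis"
begin

definition subdifferential :: "'a::real_inner set \<Rightarrow> ('a \<Rightarrow> real) \<Rightarrow> 'a \<Rightarrow> 'a set" where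
  "subdifferential D w x = {p. \<forall>y\<in>D. w y \<ge> w x + inner p (y - x)}"

end

theory Submission
  imports Defs
begin

lemma sym_inner:
  fixes A :: "real ^ 'n ^ 'n"
  assumes "transpose A = A"
  shows "inner (A *v z) h = inner z (A *v h)"
proof -
  have "inner z (A *v h) = inner (z v* A) h" by (simp add: dot_lmul_matrix)
  also have "z v* A = transpose A *v z" by simp
  finally show ?thesis using assms by simp
qed

lemma quad_expand:
  fixes A :: "real ^ 'n ^ 'n"
  assumes "transpose A = A"
  shows "inner (A *v (h + s *\<^sub>R z)) (h + s *\<^sub>R z) =
         inner (A *v h) h + 2 * s * inner (A *v h) z + s^2 * inner (A *v z) z"
proof -
  have l: "A *v (h + s *\<^sub>R z) = A *v h + s *\<^sub>R (A *v z)"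
    using linear_add[OF matrix_vector_mul_linear[of A]] linear_scale[OF matrix_vector_mul_linear[of A]] by simp
  have "inner (A *v z) h = inner (A *v h) z" using sym_inner[OF assms] by (simp add: inner_commute)
  then show ?thesis unfolding l by (simp add: inner_add_left inner_add_right algebra_simps power2_eq_square)
qed

lemma key:
  fixes D :: "(real ^ 'n) set" and w :: "real ^ 'n \<Rightarrow> real"
    and x0 p0 :: "real ^ 'n" and A :: "real ^ 'n ^ 'n"
  assumes "open D" "x0 \<in> D" "transpose A = A"
    and lo: "(\<lambda>x. w x - (w x0 + inner p0 (x - x0) + (1/2) * inner (A *v (x - x0)) (x - x0)))
           \<in> o[at x0](\<lambda>x. (norm (x - x0))\<^sup>2)"
    and "\<eta> > 0"
  shows "\<exists>d>0. \<forall>x\<in>D. 0 < norm (x - x0) \<and> norm (x - x0) < d \<longrightarrow>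
           (\<forall>p\<in>subdifferential D w x. norm (p - p0 - A *v (x - x0)) \<le> \<eta> * norm (x - x0))"
proof -
  obtain K where K: "K > 0" "\<And>z. norm (A *v z) \<le> norm z * K"
    using bounded_linear.pos_bounded[OF matrix_vector_mul_bounded_linear[of A]] by blast
  define t where "t = \<eta> / (K + 1)"
  have t: "t > 0" using K \<open>\<eta> > 0\<close> by (simp add: t_def)
  have tK: "t * K \<le> \<eta>" using K \<open>\<eta> > 0\<close> by (simp add: t_def field_simps)
  define c where "c = (1 + t)^2 + 1"
  have c: "c > 0" unfolding c_def by (simp add: add_nonneg_pos)
  define \<epsilon> where "\<epsilon> = \<eta> * t / (2 * c)"
  have \<epsilon>: "\<epsilon> > 0" using t c \<open>\<eta> > 0\<close> by (simp add: \<epsilon>_def)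
  have \<epsilon>c: "\<epsilon> * c = \<eta> * t / 2" using c by (simp add: \<epsilon>_def)
  define R where "R = (\<lambda>x. w x - (w x0 + inner p0 (x - x0) + (1/2) * inner (A *v (x - x0)) (x - x0)))"
  have "eventually (\<lambda>x. norm (R x) \<le> \<epsilon> * norm ((norm (x - x0))\<^sup>2)) (at x0)"
    using landau_o.smallD[OF lo \<epsilon>] unfolding R_def .
  then obtain d1 where d1: "d1 > 0"
    "\<And>u. u \<noteq> x0 \<Longrightarrow> dist u x0 < d1 \<Longrightarrow> norm (R u) \<le> \<epsilon> * norm ((norm (u - x0))\<^sup>2)"
    unfolding eventually_at by blast
  have R1: "\<bar>R u\<bar> \<le> \<epsilon> * (norm (u - x0))\<^sup>2" if "norm (u - x0) < d1" for u
  proof (cases "u = x0")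
    case True then show ?thesis by (simp add: R_def)
  next
    case False then show ?thesis using d1(2)[of u] that by (simp add: dist_norm)
  qed
  obtain d2 where d2: "d2 > 0" "ball x0 d2 \<subseteq> D" using assms(1,2) open_contains_ball by blast
  define d where "d = min d1 d2 / (1 + t)"
  have "d > 0" using d1 d2 t by (simp add: d_def)
  moreover have "norm (p - p0 - A *v (x - x0)) \<le> \<eta> * norm (x - x0)"
    if x: "x \<in> D" "0 < norm (x - x0)" "norm (x - x0) < d" and p: "p \<in> subdifferential D w x" for x p
  proof -
    define h where "h = x - x0"
    define r where "r = norm h"
    define v where "v = p - p0 - A *v h"
    have r: "r > 0" "r < d" using x by (simp_all add: r_def h_def)
    show ?thesis
    proof (cases "v = 0")
      case True then show ?thesis using r \<open>\<eta> > 0\<close> by (simp add: v_def h_def r_def)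
    next
      case False
      define z where "z = v /\<^sub>R norm v"
      have nz: "norm z = 1" using False by (simp add: z_def)
      have vz: "inner v z = norm v" using False
        by (simp add: z_def inner_scaleR_right power2_norm_eq_inner[symmetric] power2_eq_square)
      define s where "s = t * r"
      have s: "s > 0" using t r by (simp add: s_def)
      define y where "y = x + s *\<^sub>R z"
      have yh: "y - x0 = h + s *\<^sub>R z" by (simp add: y_def h_def)
      have ny: "norm (y - x0) \<le> (1 + t) * r"
        using norm_triangle_ineq[of h "s *\<^sub>R z"] nz s unfolding yh by (simp add: s_def r_def algebra_simps)
      have rd: "(1 + t) * r < min d1 d2" using r t by (simp add: d_def field_simps)
      have "y \<in> D" using ny rd d2(2) by (auto simp: dist_norm norm_minus_commute)
      then have sub: "w y \<ge> w x + inner p (y - x)" using p by (simp add: subdifferential_def)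
      have Ry: "\<bar>R y\<bar> \<le> \<epsilon> * ((1 + t) * r)^2"
      proof -
        have "\<bar>R y\<bar> \<le> \<epsilon> * (norm (y - x0))\<^sup>2" using R1 ny rd by simp
        also have "\<dots> \<le> \<epsilon> * ((1 + t) * r)^2"
          using ny \<epsilon> by (intro mult_left_mono power_mono) auto
        finally show ?thesis .
      qed
      have "r \<le> (1 + t) * r" using r t by simp
      then have "r < d1" using rd by linarith
      then have Rx: "\<bar>R x\<bar> \<le> \<epsilon> * r^2" using R1[of x] by (simp add: r_def h_def)
      have Az: "inner (A *v z) z \<le> K"
        using Cauchy_Schwarz_ineq2[of "A *v z" z] K(2)[of z] nz by simp
      have wy: "w y = R y + w x0 + inner p0 (h + s *\<^sub>R z) + 1/2 * inner (A *v (h + s *\<^sub>R z)) (h + s *\<^sub>R z)"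
        unfolding R_def yh[symmetric] by simp
      have wx: "w x = R x + w x0 + inner p0 h + 1/2 * inner (A *v h) h"
        unfolding R_def h_def by simp
      have "s * inner p z \<le> s * inner p0 z + s * inner (A *v h) z + s^2 / 2 * inner (A *v z) z + R y - R x"
        using sub unfolding wy wx quad_expand[OF assms(3)]
        by (simp add: y_def inner_add_right algebra_simps)
      moreover have "inner v z = inner p z - inner p0 z - inner (A *v h) z"
        by (simp add: v_def inner_diff_left)
      then have e: "inner p z = norm v + inner p0 z + inner (A *v h) z"
        using vz by linarith
      have "s * inner p z = s * norm v + s * inner p0 z + s * inner (A *v h) z"
        unfolding e by (simp add: distrib_left)
      ultimately have "s * norm v \<le> s^2 / 2 * inner (A *v z) z + R y - R x"
        by linarith
      also have "\<dots> \<le> s^2 / 2 * K + \<epsilon> * ((1 + t) * r)^2 + \<epsilon> * r^2"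
        using Az Ry Rx s by (smt (verit) mult_left_mono zero_le_divide_iff zero_le_power2)
      also have "\<dots> = s * (t * K * r / 2) + (\<epsilon> * c) * r^2"
        by (simp add: s_def c_def power2_eq_square algebra_simps)
      also have "\<dots> = s * (t * K * r / 2 + \<eta> * r / 2)"
        unfolding \<epsilon>c by (simp add: s_def power2_eq_square algebra_simps)
      also have "\<dots> \<le> s * (\<eta> * r)"
        using tK r s by (intro mult_left_mono) (auto simp: field_simps mult_right_mono)
      finally have "norm v \<le> \<eta> * r" using s by simp
      then show ?thesis by (simp add: v_def h_def r_def)
    qed
  qed
  ultimately show ?thesis by blast
qed

theorem lemma8:
  fixes D :: "(real ^ 'n) set" and w :: "real ^ 'n \<Rightarrow> real"
    and x0 p0 :: "real ^ 'n" and A :: "real ^ 'n ^ 'n"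
    and f :: "real ^ 'n \<Rightarrow> real" and gradf :: "real ^ 'n \<Rightarrow> real ^ 'n"
    and U :: "(real ^ 'n) set"
  assumes "open D" and "convex D" and "convex_on D w" and "x0 \<in> D"
    and "transpose A = A"
    and "(\<lambda>x. w x - (w x0 + inner p0 (x - x0) + (1/2) * inner (A *v (x - x0)) (x - x0)))
           \<in> o[at x0](\<lambda>x. (norm (x - x0))\<^sup>2)"
    and "open U" and "p0 \<in> U"
    and "\<And>p. p \<in> U \<Longrightarrow> (f has_derivative (\<lambda>h. inner (gradf p) h)) (at p)"
    and "continuous_on U gradf"
  shows "\<forall>e>0. \<exists>d>0. \<forall>x\<in>D. 0 < norm (x - x0) \<and> norm (x - x0) < d \<longrightarrow>
           (\<forall>p\<in>subdifferential D w x.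
              \<bar>f p - f p0 - inner (gradf p0) (A *v (x - x0))\<bar> \<le> e * norm (x - x0))"
proof (intro allI impI)
  fix e :: real assume e: "e > 0"
  define g where "g = gradf p0"
  define G where "G = norm g"
  have G: "G \<ge> 0" by (simp add: G_def)
  obtain K where K: "K > 0" "\<And>z. norm (A *v z) \<le> norm z * K"
    using bounded_linear.pos_bounded[OF matrix_vector_mul_bounded_linear[of A]] by blast
  define \<eta>1 where "\<eta>1 = e / (2 * (K + 1))"
  have \<eta>1: "\<eta>1 > 0" "\<eta>1 * (K + 1) = e / 2" using e K by (simp_all add: \<eta>1_def field_simps)
  have "(f has_derivative (\<lambda>h. inner g h)) (at p0)" using assms(8,9) by (simp add: g_def)
  then obtain d0 where d0: "d0 > 0"
    "\<And>q. norm (q - p0) < d0 \<Longrightarrow> norm (f q - f p0 - inner g (q - p0)) \<le> \<eta>1 * norm (q - p0)"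
    unfolding has_derivative_at_alt using \<eta>1(1) by blast
  define \<eta>2 where "\<eta>2 = min 1 (e / (2 * (G + 1)))"
  have \<eta>2: "\<eta>2 > 0" "\<eta>2 \<le> 1" "G * \<eta>2 \<le> e / 2"
  proof -
    show "\<eta>2 > 0" "\<eta>2 \<le> 1" using e G by (simp_all add: \<eta>2_def)
    have "G * \<eta>2 \<le> G * (e / (2 * (G + 1)))" using G by (intro mult_left_mono) (auto simp: \<eta>2_def)
    also have "\<dots> \<le> e / 2" using G e by (simp add: field_simps)
    finally show "G * \<eta>2 \<le> e / 2" .
  qed
  obtain d1 where d1: "d1 > 0" "\<forall>x\<in>D. 0 < norm (x - x0) \<and> norm (x - x0) < d1 \<longrightarrow>
           (\<forall>p\<in>subdifferential D w x. norm (p - p0 - A *v (x - x0)) \<le> \<eta>2 * norm (x - x0))"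
    using key[OF assms(1,4,5,6) \<eta>2(1)] by blast
  define d where "d = min d1 (d0 / (K + 1))"
  have "d > 0" using d0 d1 K by (simp add: d_def)
  moreover have "\<bar>f p - f p0 - inner g (A *v (x - x0))\<bar> \<le> e * norm (x - x0)"
    if x: "x \<in> D" "0 < norm (x - x0)" "norm (x - x0) < d" and p: "p \<in> subdifferential D w x" for x p
  proof -
    define h where "h = x - x0"
    define r where "r = norm h"
    define v where "v = p - p0 - A *v h"
    have r: "r > 0" "r < d1" "(K + 1) * r < d0" using x K by (simp_all add: r_def h_def d_def field_simps)
    have nv: "norm v \<le> \<eta>2 * r" using d1(2) x p r by (simp add: v_def r_def h_def)
    have "norm v \<le> r" proof -
      have "\<eta>2 * r \<le> 1 * r" using \<eta>2(2) r(1) by (intro mult_right_mono) auto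
      then show ?thesis using nv by simp
    qed
    have pp: "p - p0 = v + A *v h" by (simp add: v_def)
    have "norm (p - p0) \<le> norm v + norm (A *v h)" unfolding pp by (rule norm_triangle_ineq)
    also have "\<dots> \<le> r + r * K" using \<open>norm v \<le> r\<close> K(2)[of h] by (simp add: r_def)
    finally have np: "norm (p - p0) \<le> (K + 1) * r" by (simp add: algebra_simps)
    have df: "\<bar>f p - f p0 - inner g (p - p0)\<bar> \<le> \<eta>1 * ((K + 1) * r)"
      proof -
      have "\<bar>f p - f p0 - inner g (p - p0)\<bar> \<le> \<eta>1 * norm (p - p0)"
        using d0(2)[of p] np r by simp
      also have "\<dots> \<le> \<eta>1 * ((K + 1) * r)" using np \<eta>1(1) by (intro mult_left_mono) auto
      finally show ?thesis .
    qed
    have gv: "\<bar>inner g v\<bar> \<le> G * (\<eta>2 * r)"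
      proof -
      have "\<bar>inner g v\<bar> \<le> G * norm v" using Cauchy_Schwarz_ineq2[of g v] by (simp add: G_def)
      also have "\<dots> \<le> G * (\<eta>2 * r)" using nv G by (intro mult_left_mono) auto
      finally show ?thesis .
    qed
    have eq: "f p - f p0 - inner g (A *v h) = (f p - f p0 - inner g (p - p0)) + inner g v"
      by (simp add: v_def inner_diff_right)
    have "\<bar>f p - f p0 - inner g (A *v h)\<bar> \<le> \<eta>1 * ((K + 1) * r) + G * (\<eta>2 * r)"
      unfolding eq using df gv by linarith
    also have "\<dots> = (\<eta>1 * (K + 1)) * r + (G * \<eta>2) * r" by (simp add: algebra_simps)
    also have "\<dots> \<le> e / 2 * r + e / 2 * r"
      using \<eta>1(2) \<eta>2(3) r by (intro add_mono mult_right_mono) auto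
    finally show ?thesis by (simp add: h_def r_def)
  qed
  ultimately show "\<exists>d>0. \<forall>x\<in>D. 0 < norm (x - x0) \<and> norm (x - x0) < d \<longrightarrow>
           (\<forall>p\<in>subdifferential D w x.
              \<bar>f p - f p0 - inner (gradf p0) (A *v (x - x0))\<bar> \<le> e * norm (x - x0))"
    unfolding g_def by blast
qed

end
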